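(* Under the GoTrim-with-GoRank setting described in the context, for every node $k\in[n]$ and every $t\ge 1$, $$\big|\mathbb{E}[W_k(t)]-w_{n,\alpha}(r_k)\big|\le \frac{3}{c\,t}\cdot\frac{\sigma_k^2}{\gamma_k^2\,(1-2\alpha)},$$ where $c=\lambda_2/|E|$, $\sigma_k=n^{3/2}\sqrt{u_k(1-u_k)}$ with $u_k=(r_k-1)/n$, and $\gamma_k=\min(|r_k-a|,|r_k-b|)$ with $a=\lfloor\alpha n\rfloor+\tfrac12$, $b=n-\lfloor\alpha n\rfloor+\tfrac12$ (note $\gamma_k\ge 1/2$).
   Context: Let $n\ge 2$ and let $\mathcal G=(V,E)$ be a connected, non-bipartite, undirected graph with vertex set $V=[n]$; $\mathbf{L}=\mathbf{D}-\mathbf{A}$ is its Laplacian and $\lambda_2>0$ the second smallest eigenvalue of $\mathbf{L}$. Node $k$ holds a real observation $X_k$, pairwise distinct, with rank $r_k=1+\sum_{l}\mathbb{I}_{\{X_k>X_l\}}$. Fix $\alpha\in(0,1/2)$, let $m=\lfloor\alpha n\rfloor$ and $I_{n,\alpha}=[m+\tfrac12,\,n-m+\tfrac12]$, and define $w_{n,\alpha}(x)=\frac{n}{n-2m}\,\mathbb{I}_{\{x\in I_{n,\alpha}\}}$ for real $x$. Algorithm GoTrim paired with GoRank: initialize $Y_k(0)=X_k$, $R'_k(0)=0$, $Z_k(0)=0$, $W_k(0)=0$. At each iteration $s=1,2,\dots$: (i) every node $k$ sets $R'_k(s)=(1-1/s)R'_k(s-1)+(1/s)\mathbb{I}_{\{X_k>Y_k(s-1)\}}$,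 $R_k(s)=nR'_k(s)+1$, $W_k(s)=w_{n,\alpha}(R_k(s))$, and $\tilde Z_k(s)=Z_k(s-1)+(W_k(s)-W_k(s-1))X_k$; (ii) an edge $(i,j)$ is drawn uniformly at random from $E$, independently of the past; (iii) $Z_i(s)=Z_j(s)=(\tilde Z_i(s)+\tilde Z_j(s))/2$ and $Z_l(s)=\tilde Z_l(s)$ for $l\notin\{i,j\}$; and $Y_i(s)=Y_j(s-1)$, $Y_j(s)=Y_i(s-1)$, other $Y_l$ unchanged. Expectations are over the edge sampling. *)

theory Defs
  imports "HOL-Analysis.Analysis" "HOL-Library.FuncSet"
begin

(* Graph: vertex set = UNIV of a finite type 'n (so n = CARD('n)),
   undirected edges = 2-element subsets of the vertex set. *)

definition adj :: "'n set set \<Rightarrow> 'n \<Rightarrow> 'n \<Rightarrow> bool" where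
  "adj E i j \<longleftrightarrow> {i, j} \<in> E"

definition simple_graph :: "'n set set \<Rightarrow> bool" where
  "simple_graph E \<longleftrightarrow> (\<forall>e\<in>E. card e = 2)"

definition connected_graph :: "'n set set \<Rightarrow> bool" where
  "connected_graph E \<longleftrightarrow> (\<forall>i j. (adj E)\<^sup>*\<^sup>* i j)"

definition bipartite :: "'n set set \<Rightarrow> bool" where
  "bipartite E \<longleftrightarrow> (\<exists>S. \<forall>e\<in>E. card (e \<inter> S) = 1)"

definition adjacency_matrix :: "('n::finite) set set \<Rightarrow> real^'n^'n" where
  "adjacency_matrix E = (\<chi> i j. if {i, j} \<in> E then 1 else 0)"

definition degree_matrix :: "('n::finite) set set \<Rightarrow> real^'n^'n" where
  "degree_matrix E = (\<chi> i j. if i = j then real (card {l. {i, l} \<in> E}) else 0)"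

definition laplacian :: "('n::finite) set set \<Rightarrow> real^'n^'n" where
  "laplacian E = degree_matrix E - adjacency_matrix E"

definition eigenvalues :: "real^'n^'n \<Rightarrow> real set" where
  "eigenvalues M = {\<mu>. \<exists>x. x \<noteq> 0 \<and> M *v x = \<mu> *\<^sub>R x}"

definition eigenspace :: "real^'n^'n \<Rightarrow> real \<Rightarrow> (real^'n) set" where
  "eigenspace M \<mu> = {x. M *v x = \<mu> *\<^sub>R x}"

(* second smallest eigenvalue of a (symmetric) matrix, counted with multiplicity
   (for symmetric matrices geometric = algebraic multiplicity) *)
definition second_smallest_eigenvalue :: "real^'n^'n \<Rightarrow> real" where
  "second_smallest_eigenvalue M =
     (let m = Min (eigenvalues M) in
      if dim (eigenspace M m) \<ge> 2 then m else Min {\<mu>\<in>eigenvalues M. \<mu> > m})"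

definition obs_rank :: "('n::finite \<Rightarrow> real) \<Rightarrow> 'n \<Rightarrow> nat" where
  "obs_rank X k = 1 + card {l. X k > X l}"

definition trim_weight :: "nat \<Rightarrow> real \<Rightarrow> real \<Rightarrow> real" where
  "trim_weight n \<alpha> x =
     (let m = real (nat \<lfloor>\<alpha> * real n\<rfloor>) in
      if m + 1/2 \<le> x \<and> x \<le> real n - m + 1/2 then real n / (real n - 2 * m) else 0)"

(* state (R', Z, W, Y) of GoTrim+GoRank *)
type_synonym 'n gstate = "('n \<Rightarrow> real) \<times> ('n \<Rightarrow> real) \<times> ('n \<Rightarrow> real) \<times> ('n \<Rightarrow> real)"

definition gotrim_step ::
  "('n::finite \<Rightarrow> real) \<Rightarrow> real \<Rightarrow> nat \<Rightarrow> 'n set \<Rightarrow> 'n gstate \<Rightarrow> 'n gstate" where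
  "gotrim_step X \<alpha> s e st =
     (case st of (R', Z, W, Y) \<Rightarrow>
       let n = CARD('n);
           R'n = (\<lambda>k. (1 - 1 / real s) * R' k + (1 / real s) * (if X k > Y k then 1 else 0));
           Wn = (\<lambda>k. trim_weight n \<alpha> (real n * R'n k + 1));
           Zt = (\<lambda>k. Z k + (Wn k - W k) * X k);
           Zn = (\<lambda>l. if l \<in> e then (\<Sum>i\<in>e. Zt i) / 2 else Zt l);
           Yn = (\<lambda>l. if l \<in> e then Y (the_elem (e - {l})) else Y l)
       in (R'n, Zn, Wn, Yn))"

primrec gotrim_state ::
  "('n::finite \<Rightarrow> real) \<Rightarrow> real \<Rightarrow> (nat \<Rightarrow> 'n set) \<Rightarrow> nat \<Rightarrow> 'n gstate" where
  "gotrim_state X \<alpha> es 0 = ((\<lambda>_. 0), (\<lambda>_. 0), (\<lambda>_. 0), X)"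
| "gotrim_state X \<alpha> es (Suc s) = gotrim_step X \<alpha> (Suc s) (es (Suc s)) (gotrim_state X \<alpha> es s)"

definition W_at :: "('n::finite \<Rightarrow> real) \<Rightarrow> real \<Rightarrow> (nat \<Rightarrow> 'n set) \<Rightarrow> nat \<Rightarrow> 'n \<Rightarrow> real" where
  "W_at X \<alpha> es t k = fst (snd (snd (gotrim_state X \<alpha> es t))) k"

(* E[W_k(t)]: edges e_1..e_t i.i.d. uniform on E, i.e. uniform average over E^t *)
definition expected_W :: "('n::finite) set set \<Rightarrow> ('n \<Rightarrow> real) \<Rightarrow> real \<Rightarrow> nat \<Rightarrow> 'n \<Rightarrow> real" where
  "expected_W E X \<alpha> t k =
     (\<Sum>es\<in>Pi\<^sub>E {1..t} (\<lambda>_. E). W_at X \<alpha> es t k) / real (card E) ^ t"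

end

theory Submission
  imports Defs
begin


lemma lap_mult: "(laplacian E *v x) $ i = (\<Sum>j\<in>UNIV. if {i,j}\<in>E then x$i - x$j else 0)"
proof -
  have "(laplacian E *v x) $ i = (\<Sum>j\<in>UNIV. (if i = j then real (card {l. {i, l} \<in> E}) else 0) * x$j)
         - (\<Sum>j\<in>UNIV. (if {i,j}\<in>E then 1 else 0) * x$j)"
    unfolding laplacian_def degree_matrix_def adjacency_matrix_def matrix_vector_mult_def
    by (simp add: left_diff_distrib sum_subtractf)
  also have "(\<Sum>j\<in>UNIV. (if i = j then real (card {l. {i, l} \<in> E}) else 0) * x$j)
     = (\<Sum>j\<in>UNIV. if {i,j}\<in>E then x$i else 0)"
  proof -
    have "(\<Sum>j\<in>UNIV. (if i = j then real (card {l. {i, l} \<in> E}) else 0) * x$j)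
       = (\<Sum>j\<in>UNIV. if i = j then real (card {l. {i, l} \<in> E}) * x$i else 0)"
      by (rule sum.cong) auto
    then show ?thesis by (simp add: sum.If_cases)
  qed
  also have "(\<Sum>j\<in>UNIV. (if {i,j}\<in>E then 1 else 0) * x$j) = (\<Sum>j\<in>UNIV. if {i,j}\<in>E then x$j else 0)"
    by (rule sum.cong) auto
  finally show ?thesis by (simp add: sum_subtractf[symmetric] cong: if_cong) (rule sum.cong; auto)
qed

definition dsum :: "('n::finite) set set \<Rightarrow> ('n \<Rightarrow> 'n \<Rightarrow> real) \<Rightarrow> real" where
  "dsum E f = (\<Sum>i\<in>UNIV. \<Sum>j\<in>UNIV. if {i,j}\<in>E then f i j else 0)"

lemma dsum_swap: "dsum E f = dsum E (\<lambda>i j. f j i)"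
  unfolding dsum_def by (subst sum.swap) (simp add: insert_commute)

lemma dsum_add: "dsum E (\<lambda>i j. f i j + g i j) = dsum E f + dsum E g"
  unfolding dsum_def by (simp add: sum.distrib[symmetric] if_distrib cong: if_cong)

lemma dsum_diff: "dsum E (\<lambda>i j. f i j - g i j) = dsum E f - dsum E g"
  unfolding dsum_def by (simp add: sum_subtractf[symmetric]) (rule sum.cong; auto intro!: sum.cong)

lemma dsum_nonneg: "(\<And>i j. f i j \<ge> 0) \<Longrightarrow> dsum E f \<ge> 0"
  unfolding dsum_def by (intro sum_nonneg) auto

lemma inner_lap: "y \<bullet> (laplacian E *v x) = dsum E (\<lambda>i j. y$i * (x$i - x$j))"
  unfolding dsum_def inner_vec_def lap_mult
  by (simp add: sum_distrib_left) (rule sum.cong; auto intro!: sum.cong)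

lemma lap_sym: "y \<bullet> (laplacian E *v x) = x \<bullet> (laplacian E *v y)"
proof -
  have "y \<bullet> (laplacian E *v x) = dsum E (\<lambda>i j. y$i * x$i) - dsum E (\<lambda>i j. y$i * x$j)"
    by (simp add: inner_lap right_diff_distrib dsum_diff[symmetric])
  also have "dsum E (\<lambda>i j. y$i * x$j) = dsum E (\<lambda>i j. x$i * y$j)"
    by (subst dsum_swap) (simp add: mult.commute)
  also have "dsum E (\<lambda>i j. y$i * x$i) = dsum E (\<lambda>i j. x$i * y$i)"
    by (simp add: mult.commute)
  finally show ?thesis
    by (simp add: inner_lap right_diff_distrib dsum_diff[symmetric])
qed

lemma lap_quad: "2 * (x \<bullet> (laplacian E *v x)) = dsum E (\<lambda>i j. (x$i - x$j)^2)"
proof -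
  have "x \<bullet> (laplacian E *v x) = dsum E (\<lambda>i j. x$j * (x$j - x$i))"
    by (subst inner_lap, subst dsum_swap) simp
  then have "2 * (x \<bullet> (laplacian E *v x)) = dsum E (\<lambda>i j. x$i * (x$i - x$j)) + dsum E (\<lambda>i j. x$j * (x$j - x$i))"
    by (simp add: inner_lap)
  also have "\<dots> = dsum E (\<lambda>i j. (x$i - x$j)^2)"
    by (simp add: dsum_add[symmetric] power2_eq_square algebra_simps)
  finally show ?thesis .
qed

lemma lap_quad_nonneg: "x \<bullet> (laplacian E *v x) \<ge> 0"
  using lap_quad[of x E] dsum_nonneg[of "\<lambda>i j. (x$i - x$j)^2" E] by simp

definition ones :: "real^'n::finite" where "ones = (\<chi> i. 1)"

lemma ones_nth[simp]: "ones $ i = 1"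
  by (simp add: ones_def)

lemma lap_ones: "laplacian E *v ones = 0"
proof -
  have "(laplacian E *v ones) $ i = 0" for i
    unfolding lap_mult by (intro sum.neutral) simp
  then show ?thesis by (simp add: vec_eq_iff)
qed

lemma lap_sum0: "ones \<bullet> (laplacian E *v x) = 0"
  by (subst lap_sym) (simp add: lap_ones)

lemma sum_sq_diff: "(\<Sum>i\<in>(UNIV::'n::finite set). \<Sum>j\<in>UNIV. ((x::'n\<Rightarrow>real) i - x j)^2)
   = 2 * real CARD('n) * (\<Sum>i\<in>UNIV. (x i)^2) - 2 * (\<Sum>i\<in>UNIV. x i)^2"
  by (simp add: power2_diff sum.distrib sum_subtractf sum_distrib_left sum_distrib_right
      power2_eq_square algebra_simps)

lemma lap_quad_le: "x \<bullet> (laplacian E *v x) \<le> real CARD('n::finite) * (x \<bullet> (x::real^'n))"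
proof -
  have "dsum E (\<lambda>i j. (x$i - x$j)^2) \<le> (\<Sum>i\<in>UNIV. \<Sum>j\<in>UNIV. (x$i - x$j)^2)"
    unfolding dsum_def by (intro sum_mono) auto
  also have "\<dots> = 2 * real CARD('n) * (\<Sum>i\<in>UNIV. (x$i)^2) - 2 * (\<Sum>i\<in>UNIV. x$i)^2"
    by (rule sum_sq_diff)
  also have "\<dots> \<le> 2 * real CARD('n) * (x \<bullet> x)"
    by (simp add: inner_vec_def power2_eq_square)
  finally show ?thesis using lap_quad[of x E] by simp
qed


locale gctx =
  fixes E :: "('n::finite) set set"
  assumes sg: "simple_graph E" and conn: "connected_graph E" and nbip: "\<not> bipartite E"
    and card2: "CARD('n) \<ge> 2"
begin

lemma no_loop: "{i} \<notin> E"
  using sg unfolding simple_graph_def by force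

lemma edge2: "e \<in> E \<Longrightarrow> \<exists>a b. a \<noteq> b \<and> e = {a,b}"
  using sg unfolding simple_graph_def card_2_iff by blast

lemma finE: "finite E"
  by simp

lemma const_on_conn:
  assumes "\<And>i j. {i,j} \<in> E \<Longrightarrow> f i = f j"
  shows "f a = f b"
proof -
  have "(adj E)\<^sup>*\<^sup>* a b" using conn unfolding connected_graph_def by blast
  then show ?thesis
    by (induction rule: rtranclp_induct) (auto simp: adj_def dest: assms)
qed

lemma two_elems: "\<exists>a b::'n. a \<noteq> b"
proof (rule ccontr)
  assume "\<not> ?thesis"
  then have "UNIV = {undefined::'n}" by auto
  then have "card (UNIV::'n set) = card {undefined::'n}" by (rule arg_cong)
  then have "CARD('n) = 1" by simp
  with card2 show False by simp
qed

lemma E_ne: "E \<noteq> {}"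
proof
  assume "E = {}"
  obtain a b :: 'n where "a \<noteq> b" using two_elems by blast
  have "(\<lambda>i. i = a) a = (\<lambda>i. i = a) b"
    by (rule const_on_conn) (use \<open>E = {}\<close> in auto)
  with \<open>a \<noteq> b\<close> show False by simp
qed

lemma N_pos: "card E > 0"
  using E_ne finE by (simp add: card_gt_0_iff)

lemma q0_const:
  assumes "x \<bullet> (laplacian E *v x) = 0"
  shows "x$a = x$b"
proof (rule const_on_conn[where f="\<lambda>i. x$i"])
  fix i j assume ij: "{i,j} \<in> E"
  have "dsum E (\<lambda>i j. (x$i - x$j)^2) = 0" using lap_quad[of x E] assms by simp
  then have "\<forall>i\<in>UNIV. (\<Sum>j\<in>UNIV. if {i,j}\<in>E then (x$i - x$j)^2 else 0) = 0"
    unfolding dsum_def by (subst sum_nonneg_eq_0_iff[symmetric]) (auto intro!: sum_nonneg)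
  then have "(\<Sum>j\<in>UNIV. if {i,j}\<in>E then (x$i - x$j)^2 else 0) = 0" by blast
  then have "\<forall>j\<in>UNIV. (if {i,j}\<in>E then (x$i - x$j)^2 else 0) = 0"
    by (subst sum_nonneg_eq_0_iff[symmetric]) auto
  then show "x$i = x$j" using ij by (metis UNIV_I power_eq_0_iff right_minus_eq)
qed

lemma n_le_N: "CARD('n) \<le> card E"
proof -
  define ind where "ind = (\<lambda>e. (\<chi> i. if i \<in> e then 1 else 0) :: real^'n)"
  define V where "V = ind ` E"
  have "\<not> dim V < DIM(real^'n)"
  proof
    assume dV: "dim V < DIM(real^'n)"
    obtain y :: "real^'n" where y0: "y \<noteq> 0" and yo: "\<And>z. z \<in> span V \<Longrightarrow> orthogonal y z"
      using orthogonal_to_subspace_exists[OF dV] by metis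
    have ed: "y$i + y$j = 0" if "{i,j} \<in> E" for i j
    proof -
      have ij: "i \<noteq> j" using that no_loop by auto
      have "orthogonal y (ind {i,j})" using that by (intro yo span_base) (auto simp: V_def)
      then have "(\<Sum>l\<in>UNIV. y$l * (if l \<in> {i,j} then 1 else 0)) = 0"
        by (simp add: orthogonal_def inner_vec_def ind_def)
      moreover have "(\<Sum>l\<in>UNIV. y$l * (if l \<in> {i,j} then 1 else 0)) = (\<Sum>l\<in>UNIV. if l \<in> {i,j} then y$l else 0)"
        by (rule sum.cong) auto
      moreover have "(\<Sum>l\<in>UNIV. if l \<in> {i,j} then y$l else 0) = sum (\<lambda>l. y$l) {i,j}"
        by (simp add: sum.If_cases, rule arg_cong[where f="sum _"], auto)
      ultimately show ?thesis using ij by simp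
    qed
    obtain a where a: "y$a \<noteq> 0" using y0 by (auto simp: vec_eq_iff)
    have absc: "\<bar>y$i\<bar> = \<bar>y$a\<bar>" for i
      by (rule const_on_conn[where f="\<lambda>i. \<bar>y$i\<bar>"]) (use ed in force)
    define S where "S = {i. y$i > 0}"
    have "bipartite E"
      unfolding bipartite_def
    proof (intro exI ballI)
      fix e assume "e \<in> E"
      then obtain i j where ij: "i \<noteq> j" "e = {i,j}" using edge2 by blast
      have s: "y$i + y$j = 0" using ed \<open>e\<in>E\<close> ij by simp
      have "y$i \<noteq> 0" using absc[of i] a by auto
      show "card (e \<inter> S) = 1"
      proof (cases "y$i > 0")
        case True
        then have "e \<inter> S = {i}" using s ij by (auto simp: S_def)
        then show ?thesis by simp
      next
        case False
        then have "e \<inter> S = {j}" using s ij \<open>y$i \<noteq> 0\<close> by (auto simp: S_def)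
        then show ?thesis by simp
      qed
    qed
    with nbip show False by simp
  qed
  then have "CARD('n) \<le> dim V" by simp
  also have "dim V \<le> card V" by (rule dim_le_card) (auto simp: V_def intro: span_base)
  also have "card V \<le> card E" unfolding V_def by (rule card_image_le) simp
  finally show ?thesis .
qed

end


lemma eig_finite:
  fixes M :: "real^'n::finite^'n"
  assumes sym: "\<And>x y. y \<bullet> (M *v x) = x \<bullet> (M *v y)"
  shows "finite (eigenvalues M)"
proof -
  define ev where "ev = (\<lambda>\<mu>. SOME x. x \<noteq> 0 \<and> M *v x = \<mu> *\<^sub>R x)"
  have evp: "ev \<mu> \<noteq> 0 \<and> M *v ev \<mu> = \<mu> *\<^sub>R ev \<mu>" if "\<mu> \<in> eigenvalues M" for \<mu>
  proof -
    have "\<exists>x. x \<noteq> 0 \<and> M *v x = \<mu> *\<^sub>R x" using that unfolding eigenvalues_def by blast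
    then show ?thesis unfolding ev_def by (rule someI_ex)
  qed
  have inj: "inj_on ev (eigenvalues M)"
  proof (rule inj_onI)
    fix a b assume a: "a \<in> eigenvalues M" and b: "b \<in> eigenvalues M" and e: "ev a = ev b"
    have "a *\<^sub>R ev a = M *v ev a" using evp[OF a] by simp
    also have "\<dots> = M *v ev b" using e by simp
    also have "\<dots> = b *\<^sub>R ev b" using evp[OF b] by simp
    finally have "(a - b) *\<^sub>R ev a = 0" using e by (simp add: scaleR_diff_left)
    then show "a = b" using evp[OF a] by simp
  qed
  have orth: "orthogonal (ev a) (ev b)" if a: "a \<in> eigenvalues M" and b: "b \<in> eigenvalues M" and ne: "a \<noteq> b" for a b
  proof -
    have "ev b \<bullet> (M *v ev a) = ev a \<bullet> (M *v ev b)" by (rule sym)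
    moreover have "ev b \<bullet> (M *v ev a) = a * (ev b \<bullet> ev a)" using evp[OF a] by simp
    moreover have "ev a \<bullet> (M *v ev b) = b * (ev a \<bullet> ev b)" using evp[OF b] by simp
    ultimately have "(a - b) * (ev a \<bullet> ev b) = 0" by (simp add: inner_commute left_diff_distrib)
    then show ?thesis using ne by (simp add: orthogonal_def)
  qed
  have "pairwise orthogonal (ev ` eigenvalues M)"
    unfolding pairwise_def using orth by blast
  then have "finite (ev ` eigenvalues M)" by (rule pairwise_orthogonal_imp_finite)
  then show ?thesis using inj by (simp add: finite_image_iff)
qed

lemma aux_ineq:
  fixes m0 t0 p0 a0 r0 s0 :: real
  assumes "m0 * (1 + 2 * t0 * p0 + t0^2 * a0) \<le> m0 + 2 * t0 * r0 + t0^2 * s0" "r0 - m0 * p0 = a0"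
  shows "0 \<le> 2 * t0 * a0 + t0^2 * (s0 - m0 * a0)"
proof -
  have "r0 = a0 + m0 * p0" using assms(2) by simp
  then show ?thesis using assms(1) by (simp add: algebra_simps power2_eq_square)
qed

context gctx begin

abbreviation "L \<equiv> laplacian E"

definition "Kset = {x::real^'n. x \<bullet> ones = 0 \<and> norm x = 1}"

lemma Kset_compact: "compact Kset"
proof -
  have "Kset = sphere 0 1 \<inter> {x. ones \<bullet> x = 0}"
    by (auto simp: Kset_def inner_commute)
  then show ?thesis using compact_Int_closed[OF compact_sphere[of "0::real^'n" 1] closed_hyperplane[of ones 0]] by simp
qed

lemma Kset_ne: "Kset \<noteq> {}"
proof -
  obtain a b :: 'n where ab: "a \<noteq> b" using two_elems by blast
  define z :: "real^'n" where "z = axis a 1 - axis b 1"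
  have ax: "axis i 1 \<bullet> ones = 1" for i
    by (simp add: inner_commute inner_axis)
  have z1: "z \<bullet> ones = 0"
    by (simp add: z_def inner_diff_left ax)
  have z0: "z \<noteq> 0"
    using ab by (auto simp: z_def vec_eq_iff axis_def)
  have "z /\<^sub>R norm z \<in> Kset"
    using z1 z0 by (simp add: Kset_def inner_scaleR_left)
  then show ?thesis by blast
qed

lemma q_cont: "continuous_on S (\<lambda>x::real^'n. x \<bullet> (L *v x))"
  by (intro continuous_intros linear_continuous_on linear_conv_bounded_linear[THEN iffD1]
      matrix_vector_mul_linear)

lemma q_scale: "(c *\<^sub>R x) \<bullet> (L *v (c *\<^sub>R x)) = c^2 * (x \<bullet> (L *v x))"
  by (simp add: matrix_vector_mult_scaleR power2_eq_square)

definition "vmin = (SOME v. v \<in> Kset \<and> (\<forall>y\<in>Kset. v \<bullet> (L *v v) \<le> y \<bullet> (L *v y)))"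
definition "mu = vmin \<bullet> (L *v vmin)"

lemma vmin: "vmin \<in> Kset" "\<And>y. y \<in> Kset \<Longrightarrow> mu \<le> y \<bullet> (L *v y)"
proof -
  have "\<exists>v. v \<in> Kset \<and> (\<forall>y\<in>Kset. v \<bullet> (L *v v) \<le> y \<bullet> (L *v y))"
    using continuous_attains_inf[OF Kset_compact Kset_ne q_cont] by blast
  then have "vmin \<in> Kset \<and> (\<forall>y\<in>Kset. vmin \<bullet> (L *v vmin) \<le> y \<bullet> (L *v y))"
    unfolding vmin_def by (rule someI_ex)
  then show "vmin \<in> Kset" "\<And>y. y \<in> Kset \<Longrightarrow> mu \<le> y \<bullet> (L *v y)"
    by (auto simp: mu_def)
qed

lemma q_ge_mu:
  assumes "x \<bullet> ones = 0"
  shows "mu * (x \<bullet> x) \<le> x \<bullet> (L *v x)"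
proof (cases "x = 0")
  case True then show ?thesis by simp
next
  case False
  define s where "s = norm x"
  have s0: "s > 0" using False by (simp add: s_def)
  have "inverse s *\<^sub>R x \<in> Kset" using assms s0 by (simp add: Kset_def inner_scaleR_left s_def)
  then have "mu \<le> (inverse s *\<^sub>R x) \<bullet> (L *v (inverse s *\<^sub>R x))" by (rule vmin)
  also have "\<dots> = (inverse s)^2 * (x \<bullet> (L *v x))"
    by (rule q_scale)
  finally have "mu * s^2 \<le> (inverse s)^2 * (x \<bullet> (L *v x)) * s^2"
    using s0 by (intro mult_right_mono) auto
  also have "\<dots> = x \<bullet> (L *v x)" using s0 by (simp add: power_inverse)
  finally show ?thesis by (simp add: s_def power2_norm_eq_inner)
qed

lemma mu_eig: "L *v vmin = mu *\<^sub>R vmin"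
proof -
  define v where "v = vmin"
  define w where "w = L *v v - mu *\<^sub>R v"
  have v1: "v \<bullet> ones = 0" "v \<bullet> v = 1"
    using vmin(1) by (auto simp: Kset_def v_def power2_norm_eq_inner[symmetric])
  have "w \<bullet> ones = (L *v v) \<bullet> ones - mu * (v \<bullet> ones)"
    by (simp add: w_def inner_diff_left)
  then have w1: "w \<bullet> ones = 0"
    using v1 lap_sum0[of E v] by (simp add: inner_commute)
  define a where "a = w \<bullet> w"
  define C where "C = w \<bullet> (L *v w) - mu * a"
  have key: "0 \<le> 2 * t * a + t^2 * C" for t
  proof -
    define z where "z = v + t *\<^sub>R w"
    have "z \<bullet> ones = 0" using v1 w1 by (simp add: z_def inner_add_left)
    then have "mu * (z \<bullet> z) \<le> z \<bullet> (L *v z)" by (rule q_ge_mu)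
    moreover have "z \<bullet> (L *v z) = mu + 2 * t * (w \<bullet> (L *v v)) + t^2 * (w \<bullet> (L *v w))"
    proof -
      have Lz: "L *v (v + t *\<^sub>R w) = L *v v + t *\<^sub>R (L *v w)"
        by (simp add: matrix_vector_right_distrib matrix_vector_mult_scaleR)
      have "z \<bullet> (L *v z) = v \<bullet> (L *v v) + t * (v \<bullet> (L *v w)) + t * (w \<bullet> (L *v v)) + t * t * (w \<bullet> (L *v w))"
        unfolding z_def Lz inner_add_left inner_add_right inner_scaleR_left inner_scaleR_right
        by (simp add: distrib_left)
      moreover have "v \<bullet> (L *v w) = w \<bullet> (L *v v)" by (rule lap_sym)
      moreover have "v \<bullet> (L *v v) = mu" by (simp add: mu_def v_def)
      ultimately show ?thesis by (simp add: power2_eq_square)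
    qed
    moreover have "z \<bullet> z = 1 + 2 * t * (v \<bullet> w) + t^2 * a"
    proof -
      have "z \<bullet> z = v \<bullet> v + t * (v \<bullet> w) + t * (w \<bullet> v) + t * t * (w \<bullet> w)"
        unfolding z_def inner_add_left inner_add_right inner_scaleR_left inner_scaleR_right
        by (simp add: distrib_left)
      then show ?thesis using v1 by (simp add: inner_commute a_def power2_eq_square)
    qed
    moreover have "w \<bullet> (L *v v) - mu * (v \<bullet> w) = a"
    proof -
      have "w \<bullet> w = w \<bullet> (L *v v) - mu * (w \<bullet> v)"
        by (simp add: w_def inner_diff_right)
      then show ?thesis by (simp add: a_def inner_commute)
    qed
    ultimately show ?thesis unfolding C_def
      using aux_ineq[of mu t "v \<bullet> w" a "w \<bullet> (L *v v)" "w \<bullet> (L *v w)"] by simp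
  qed
  have "a = 0"
  proof (rule ccontr)
    assume "a \<noteq> 0"
    then have apos: "a > 0" by (simp add: a_def order_less_le)
    define t where "t = - a / (\<bar>C\<bar> + 1)"
    have tneg: "t < 0" using apos by (simp add: t_def divide_pos_pos)
    have "t * C \<ge> - a"
    proof -
      have "\<bar>t * C\<bar> = a * (\<bar>C\<bar> / (\<bar>C\<bar> + 1))" using apos by (simp add: t_def abs_mult abs_divide)
      also have "\<dots> \<le> a * 1" using apos by (intro mult_left_mono) auto
      finally show ?thesis by linarith
    qed
    then have "2 * a + t * C > 0" using apos by linarith
    then have "t * (2 * a + t * C) < 0" using tneg by (simp add: mult_neg_pos)
    moreover have "t * (2 * a + t * C) = 2 * t * a + t^2 * C" by (simp add: power2_eq_square algebra_simps)
    ultimately show False using key[of t] by linarith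
  qed
  then have "w = 0" by (simp add: a_def)
  then show ?thesis by (simp add: w_def v_def)
qed

end

lemma my_inner_cong: "x = y \<Longrightarrow> x \<bullet> z = y \<bullet> z" by simp

context gctx begin
lemma mu_pos: "mu > 0"
proof -
  have v1: "vmin \<bullet> ones = 0" "norm vmin = 1" using vmin(1) by (auto simp: Kset_def)
  have "mu \<ge> 0" using lap_quad_nonneg[of vmin E] by (simp add: mu_def)
  moreover have "mu \<noteq> 0"
  proof
    assume "mu = 0"
    then have "vmin \<bullet> (L *v vmin) = 0" by (simp add: mu_def)
    then have c: "vmin$i = vmin$j" for i j by (rule q0_const)
    obtain a :: 'n where True by simp
    have "vmin$i = (vmin$a *\<^sub>R ones)$i" for i using c[of i a] by simp
    then have "vmin = vmin$a *\<^sub>R ones" by (subst vec_eq_iff) blast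
    then have "vmin \<bullet> ones = (vmin$a *\<^sub>R ones) \<bullet> (ones::real^'n)" by (rule my_inner_cong)
    then have "vmin \<bullet> ones = vmin$a * ((ones::real^'n) \<bullet> ones)" by (simp only: inner_scaleR_left)
    moreover have "(ones::real^'n) \<bullet> ones = real CARD('n)" by (simp add: inner_vec_def)
    ultimately have "vmin$a = 0" using v1 by simp
    then have "vmin$i = 0" for i using c[of i a] by simp
    then have "vmin = 0" by (simp add: vec_eq_iff)
    then show False using v1 by simp
  qed
  ultimately show ?thesis by simp
qed

lemma eig_nonneg:
  assumes a: "L *v x = \<mu> *\<^sub>R x" "x \<noteq> 0"
  shows "\<mu> \<ge> 0"
proof (rule ccontr)
  assume "\<not> \<mu> \<ge> 0"
  have "x \<bullet> (L *v x) = \<mu> * (x \<bullet> x)" using a(1) by simp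
  moreover have "0 \<le> x \<bullet> (L *v x)" by (rule lap_quad_nonneg)
  moreover have "0 < x \<bullet> x" using a(2) by simp
  moreover have "\<mu> * (x \<bullet> x) < 0" using \<open>\<not> \<mu> \<ge> 0\<close> \<open>0 < x \<bullet> x\<close> by (simp add: mult_neg_pos)
  ultimately show False by linarith
qed
lemma zero_eig: "0 \<in> eigenvalues L"
proof -
  have ones0: "ones \<noteq> (0::real^'n)" by (simp add: vec_eq_iff)
  moreover have "L *v ones = 0 *\<^sub>R ones" using lap_ones[of E] by simp
  ultimately show ?thesis unfolding eigenvalues_def by blast
qed

lemma lambda2: "second_smallest_eigenvalue L > 0 \<and> second_smallest_eigenvalue L \<le> mu"
proof -
  have fin: "finite (eigenvalues L)" by (rule eig_finite) (rule lap_sym)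
  have ones0: "ones \<noteq> (0::real^'n)" by (simp add: vec_eq_iff)
  have nn: "\<mu>' \<ge> 0" if m: "\<mu>' \<in> eigenvalues L" for \<mu>'
  proof -
    obtain x where x: "L *v x = \<mu>' *\<^sub>R x" "x \<noteq> 0" using m unfolding eigenvalues_def by blast
    then show ?thesis by (rule eig_nonneg)
  qed
  have m0: "Min (eigenvalues L) = 0"
  proof (rule Min_eqI[OF fin])
    show "0 \<in> eigenvalues L" by (rule zero_eig)
    fix y assume "y \<in> eigenvalues L" then show "0 \<le> y" by (rule nn)
  qed
  have esub: "eigenspace L 0 \<subseteq> span {ones::real^'n}"
  proof
    fix x assume "x \<in> eigenspace L 0"
    then have "L *v x = 0" by (simp add: eigenspace_def)
    then have "x \<bullet> (L *v x) = 0" by simp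
    then have c: "x$i = x$j" for i j by (rule q0_const)
    obtain a :: 'n where True by simp
    have "x$i = (x$a *\<^sub>R ones)$i" for i using c[of i a] by simp
    then have "x = x$a *\<^sub>R ones" by (subst vec_eq_iff) blast
    moreover have "x$a *\<^sub>R ones \<in> span {ones::real^'n}" by (intro span_scale span_base) simp
    ultimately show "x \<in> span {ones}" by simp
  qed
  have "dim (eigenspace L 0) \<le> dim (span {ones::real^'n})" by (rule dim_subset) (rule esub)
  also have "\<dots> = 1" using ones0 by simp
  finally have "dim (eigenspace L 0) \<le> 1" .
  then have ss: "second_smallest_eigenvalue L = Min {\<mu>'\<in>eigenvalues L. \<mu>' > 0}"
    unfolding second_smallest_eigenvalue_def Let_def m0 by simp
  have "L *v vmin = mu *\<^sub>R vmin" by (rule mu_eig)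
  moreover have "vmin \<noteq> 0" using vmin(1) by (auto simp: Kset_def)
  ultimately have "mu \<in> eigenvalues L" unfolding eigenvalues_def by blast
  then have mu_in: "mu \<in> {\<mu>'\<in>eigenvalues L. \<mu>' > 0}" using mu_pos by simp
  have fin2: "finite {\<mu>'\<in>eigenvalues L. \<mu>' > 0}" using fin by simp
  have ne: "{\<mu>'\<in>eigenvalues L. \<mu>' > 0} \<noteq> {}" using mu_in by blast
  have "Min {\<mu>'\<in>eigenvalues L. \<mu>' > 0} \<in> {\<mu>'\<in>eigenvalues L. \<mu>' > 0}"
    by (rule Min_in[OF fin2 ne])
  moreover have "Min {\<mu>'\<in>eigenvalues L. \<mu>' > 0} \<le> mu" by (rule Min_le[OF fin2 mu_in])
  ultimately show ?thesis unfolding ss by simp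
qed

lemma rayleigh:
  assumes "x \<bullet> ones = 0"
  shows "second_smallest_eigenvalue L * (x \<bullet> x) \<le> x \<bullet> (L *v x)"
proof -
  have "second_smallest_eigenvalue L * (x \<bullet> x) \<le> mu * (x \<bullet> x)"
    using lambda2 by (intro mult_right_mono) auto
  also have "\<dots> \<le> x \<bullet> (L *v x)" by (rule q_ge_mu) (rule assms)
  finally show ?thesis .
qed

end


context gctx begin

definition "Nn = real (card E)"
definition "cc = second_smallest_eigenvalue L / Nn"
definition Pm :: "real^'n \<Rightarrow> real^'n" where "Pm z = z - (1 / Nn) *\<^sub>R (L *v z)"

lemma Nn_pos: "Nn > 0" using N_pos by (simp add: Nn_def)

lemma n_le_Nn: "real CARD('n) \<le> Nn" using n_le_N by (simp add: Nn_def)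

lemma cc_pos: "cc > 0" using lambda2 Nn_pos by (simp add: cc_def)

lemma cc_le1: "cc \<le> 1"
proof -
  have v1: "vmin \<bullet> vmin = 1" using vmin(1) by (simp add: Kset_def power2_norm_eq_inner[symmetric])
  have "mu \<le> real CARD('n)" using lap_quad_le[of vmin E] v1 by (simp add: mu_def)
  then have "second_smallest_eigenvalue L \<le> Nn" using lambda2 n_le_Nn by linarith
  then show ?thesis using Nn_pos by (simp add: cc_def)
qed

lemma Pm_lin: "Pm (a *\<^sub>R x - b *\<^sub>R y) = a *\<^sub>R Pm x - b *\<^sub>R Pm y"
  unfolding Pm_def by (simp add: matrix_vector_mult_diff_distrib matrix_vector_mult_scaleR
      scaleR_diff_right scaleR_left_commute[of "1/Nn"])

lemma Pm_sym: "x \<bullet> Pm y = y \<bullet> Pm x"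
  unfolding Pm_def inner_diff_right inner_scaleR_right
  using lap_sym[of x E y] by (simp add: inner_commute)

lemma Pm_ones: "z \<bullet> ones = 0 \<Longrightarrow> Pm z \<bullet> ones = 0"
  unfolding Pm_def inner_diff_left inner_scaleR_left
  using lap_sum0[of E z] by (simp add: inner_commute)

lemma Pm_quad: "y \<bullet> Pm y = y \<bullet> y - (y \<bullet> (L *v y)) / Nn"
  unfolding Pm_def inner_diff_right inner_scaleR_right by simp

lemma Pm_psd: "y \<bullet> ones = 0 \<Longrightarrow> 0 \<le> y \<bullet> Pm y"
proof -
  have "y \<bullet> (L *v y) \<le> real CARD('n) * (y \<bullet> y)" by (rule lap_quad_le)
  also have "\<dots> \<le> Nn * (y \<bullet> y)" using n_le_Nn by (intro mult_right_mono) auto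
  finally have "(y \<bullet> (L *v y)) / Nn \<le> y \<bullet> y" using Nn_pos by (simp add: divide_le_eq mult.commute)
  then show ?thesis by (simp add: Pm_quad)
qed

lemma Pm_upper: "y \<bullet> ones = 0 \<Longrightarrow> y \<bullet> Pm y \<le> (1 - cc) * (y \<bullet> y)"
proof -
  assume y: "y \<bullet> ones = 0"
  have "second_smallest_eigenvalue L * (y \<bullet> y) \<le> y \<bullet> (L *v y)" by (rule rayleigh) (rule y)
  then have "cc * (y \<bullet> y) \<le> (y \<bullet> (L *v y)) / Nn" using Nn_pos
    by (simp add: cc_def le_divide_eq)
  then show ?thesis by (simp add: Pm_quad algebra_simps)
qed

lemma contraction:
  assumes z: "z \<bullet> ones = 0"
  shows "norm (Pm z) \<le> (1 - cc) * norm z"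
proof -
  define p where "p = Pm z"
  define \<beta> where "\<beta> = 1 - cc"
  have b0: "\<beta> \<ge> 0" using cc_le1 by (simp add: \<beta>_def)
  have p1: "p \<bullet> ones = 0" using z by (simp add: p_def Pm_ones)
  have pp: "p \<bullet> p = z \<bullet> Pm p"
    using Pm_sym[of p z] by (simp add: p_def)
  define a where "a = norm p"
  define b where "b = norm z"
  define u where "u = a *\<^sub>R z - b *\<^sub>R p"
  have u1: "u \<bullet> ones = 0" using z p1 by (simp add: u_def inner_diff_left)
  have "0 \<le> u \<bullet> Pm u" using u1 by (rule Pm_psd)
  also have "u \<bullet> Pm u = a*a * (z \<bullet> Pm z) - a*b * (z \<bullet> Pm p) - a*b * (p \<bullet> Pm z) + b*b * (p \<bullet> Pm p)"
    unfolding u_def Pm_lin inner_diff_left inner_diff_right inner_scaleR_left inner_scaleR_right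
    by (simp add: algebra_simps)
  also have "p \<bullet> Pm z = z \<bullet> Pm p" by (rule Pm_sym)
  finally have "0 \<le> a*a * (z \<bullet> Pm z) - 2*a*b * (p \<bullet> p) + b*b * (p \<bullet> Pm p)"
    using pp by simp
  moreover have "z \<bullet> Pm z \<le> \<beta> * (b*b)"
    using Pm_upper[OF z] by (simp add: \<beta>_def b_def power2_norm_eq_inner[symmetric] power2_eq_square)
  moreover have "p \<bullet> Pm p \<le> \<beta> * (a*a)"
    using Pm_upper[OF p1] by (simp add: \<beta>_def a_def power2_norm_eq_inner[symmetric] power2_eq_square)
  moreover have "p \<bullet> p = a * a" by (simp add: a_def power2_norm_eq_inner[symmetric] power2_eq_square)
  ultimately have "0 \<le> a*a * (\<beta> * (b*b)) - 2*a*b * (a*a) + b*b * (\<beta> * (a*a))"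
    by (smt (verit) mult_left_mono zero_le_square mult_nonneg_nonneg)
  then have key: "a*a*(a*b) \<le> \<beta> * b * (a*a*b)" by (simp add: algebra_simps)
  show ?thesis
  proof (cases "a * b = 0")
    case True
    then have "a = 0 \<or> b = 0" by simp
    then show ?thesis
    proof
      assume "a = 0" then show ?thesis using b0 by (simp add: a_def p_def \<beta>_def)
    next
      assume "b = 0" then have "z = 0" by (simp add: b_def)
      then show ?thesis by (simp add: Pm_def)
    qed
  next
    case False
    then have ab: "a > 0" "b > 0" by (auto simp: a_def b_def)
    have "a * (a*a*b) \<le> \<beta> * b * (a*a*b)" using key by (simp add: algebra_simps)
    then have "a \<le> \<beta> * b" using ab by (simp add: mult_le_cancel_right)
    then show ?thesis by (simp add: a_def b_def p_def \<beta>_def)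
  qed
qed

end


definition swp :: "'n set \<Rightarrow> ('n \<Rightarrow> real) \<Rightarrow> 'n \<Rightarrow> real" where
  "swp e Y l = (if l \<in> e then Y (the_elem (e - {l})) else Y l)"

primrec Ys :: "('n \<Rightarrow> real) \<Rightarrow> (nat \<Rightarrow> 'n set) \<Rightarrow> nat \<Rightarrow> 'n \<Rightarrow> real" where
  "Ys X es 0 = X"
| "Ys X es (Suc s) = swp (es (Suc s)) (Ys X es s)"

definition cnt :: "('n \<Rightarrow> real) \<Rightarrow> 'n \<Rightarrow> (nat \<Rightarrow> 'n set) \<Rightarrow> nat \<Rightarrow> real" where
  "cnt X k es s = (\<Sum>j<s. if X k > Ys X es j k then 1 else 0)"

definition Om :: "'n set set \<Rightarrow> nat \<Rightarrow> (nat \<Rightarrow> 'n set) set" where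
  "Om E t = Pi\<^sub>E {1..t} (\<lambda>_. E)"

definition avg :: "'n set set \<Rightarrow> nat \<Rightarrow> ((nat \<Rightarrow> 'n set) \<Rightarrow> 'a::real_vector) \<Rightarrow> 'a" where
  "avg E t F = (1 / real (card E) ^ t) *\<^sub>R (\<Sum>es\<in>Om E t. F es)"

lemma aux_avg: "(s::real) > 0 \<Longrightarrow> (C + d) / (s + 1) = (1 - 1 / (s + 1)) * (C / s) + 1 / (s + 1) * d"
proof -
  assume "s > 0"
  then have h: "s + 1 \<noteq> 0" "s \<noteq> 0" by auto
  have "1 - 1 / (s + 1) = s / (s + 1)" using h by (simp add: field_simps)
  then have "(1 - 1 / (s + 1)) * (C / s) = C / (s + 1)" using h by simp
  then show ?thesis by (simp add: add_divide_distrib)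
qed

lemma state_R: "fst (gotrim_state X \<alpha> es s) = (\<lambda>k. cnt X k es s / real s)"
  and state_Y: "snd (snd (snd (gotrim_state X \<alpha> es s))) = Ys X es s"
proof (induction s)
  case 0
  { case 1 show ?case by (simp add: cnt_def) }
  { case 2 show ?case by simp }
next
  case (Suc s)
  { case 1
    have "cnt X k es (Suc s) / real (Suc s) =
        (1 - 1 / real (Suc s)) * (cnt X k es s / real s) + 1 / real (Suc s) * (if X k > Ys X es s k then 1 else 0)" for k
    proof (cases "s = 0")
      case True then show ?thesis by (simp add: cnt_def)
    next
      case False
      then have "real s > 0" by simp
      from aux_avg[OF this, of "cnt X k es s" "if X k > Ys X es s k then 1 else 0"]
      show ?thesis by (simp add: cnt_def add.commute)
    qed
    then show ?case using Suc.IH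
      by (cases "gotrim_state X \<alpha> es s") (simp add: gotrim_step_def Let_def fun_eq_iff)
  }
  { case 2
    show ?case using Suc.IH
      by (cases "gotrim_state X \<alpha> es s") (simp add: gotrim_step_def Let_def fun_eq_iff swp_def)
  }
qed

lemma W_at_eq:
  fixes X :: "'n::finite \<Rightarrow> real"
  assumes "t \<ge> 1"
  shows "W_at X \<alpha> es t k = trim_weight CARD('n) \<alpha> (real CARD('n) * (cnt X k es t / real t) + 1)"
proof -
  obtain s where t: "t = Suc s" using assms by (cases t) auto
  have "fst (snd (snd (gotrim_state X \<alpha> es (Suc s)))) k
     = trim_weight CARD('n) \<alpha> (real CARD('n) * fst (gotrim_state X \<alpha> es (Suc s)) k + 1)"
    by (cases "gotrim_state X \<alpha> es s") (simp add: gotrim_step_def Let_def)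
  then show ?thesis unfolding W_at_def t state_R by simp
qed

lemma Om_Suc_sum:
  fixes F :: "(nat \<Rightarrow> 'n set) \<Rightarrow> 'a::comm_monoid_add"
  shows "(\<Sum>es\<in>Om E (Suc t). F es) = (\<Sum>es\<in>Om E t. \<Sum>e\<in>E. F (es(Suc t := e)))"
proof -
  have I: "{1..Suc t} = insert (Suc t) {1..t}" by auto
  have nin: "Suc t \<notin> {1..t}" by simp
  have "(\<Sum>es\<in>Om E (Suc t). F es) = (\<Sum>es\<in>(\<lambda>(y, g). g(Suc t := y)) ` (E \<times> Om E t). F es)"
    unfolding Om_def I PiE_insert_eq by simp
  also have "\<dots> = (\<Sum>p\<in>E \<times> Om E t. F ((\<lambda>(y, g). g(Suc t := y)) p))"
    by (rule sum.reindex[unfolded comp_def]) (use inj_combinator[OF nin, of "\<lambda>_. E"] in \<open>simp add: Om_def\<close>)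
  also have "\<dots> = (\<Sum>(y,g)\<in>E \<times> Om E t. F (g(Suc t := y)))"
    by (rule sum.cong) (auto simp: split_def)
  also have "\<dots> = (\<Sum>e\<in>E. \<Sum>es\<in>Om E t. F (es(Suc t := e)))"
    by (rule sum.cartesian_product[symmetric])
  also have "\<dots> = (\<Sum>es\<in>Om E t. \<Sum>e\<in>E. F (es(Suc t := e)))"
    by (rule sum.swap)
  finally show ?thesis .
qed

lemma avg_Suc:
  "avg E (Suc t) F = avg E t (\<lambda>es. (1 / real (card E)) *\<^sub>R (\<Sum>e\<in>E. F (es(Suc t := e))))"
  unfolding avg_def Om_Suc_sum by (simp add: scaleR_sum_right[symmetric])

lemma Ys_upd: "j \<le> t \<Longrightarrow> Ys X (es(Suc t := e)) j = Ys X es j"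
  by (induction j) auto

lemma Ys_upd_Suc: "Ys X (es(Suc t := e)) (Suc t) = swp e (Ys X es t)"
  using Ys_upd[of t t X es e] by simp

lemma cnt_upd: "cnt X k (es(Suc t := e)) (Suc t) = cnt X k es (Suc t)"
  unfolding cnt_def by (intro sum.cong) (auto simp: Ys_upd)

lemma cnt_Suc: "cnt X k es (Suc t) = cnt X k es t + (if X k > Ys X es t k then 1 else 0)"
  unfolding cnt_def by simp

lemma card_Om: "finite E \<Longrightarrow> card (Om E t) = card E ^ t"
  unfolding Om_def by (simp add: card_PiE)

lemma finite_Om: "finite E \<Longrightarrow> finite (Om E t)"
  unfolding Om_def by (simp add: finite_PiE)

lemma avg_const: "finite E \<Longrightarrow> E \<noteq> {} \<Longrightarrow> avg E t (\<lambda>_. c) = c"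
  unfolding avg_def by (simp add: card_Om sum_constant_scaleR)

lemma avg_mono:
  fixes F G :: "(nat \<Rightarrow> 'n set) \<Rightarrow> real"
  shows "(\<And>es. es \<in> Om E t \<Longrightarrow> F es \<le> G es) \<Longrightarrow> avg E t F \<le> avg E t G"
  unfolding avg_def by (simp, intro divide_right_mono sum_mono) auto

lemma swp_perm:
  fixes f :: "real \<Rightarrow> 'a::comm_monoid_add"
  assumes "card e = 2"
  shows "(\<Sum>l\<in>UNIV. f (swp e Y l)) = (\<Sum>l\<in>(UNIV::'n::finite set). f (Y l))"
proof -
  obtain a b where ab: "a \<noteq> b" "e = {a,b}" using assms by (auto simp: card_2_iff)
  define \<sigma> where "\<sigma> = (\<lambda>l. if l = a then b else if l = b then a else l)"
  have sw: "swp e Y l = Y (\<sigma> l)" for l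
    using ab by (auto simp: swp_def \<sigma>_def insert_Diff_if)
  have "(\<Sum>l\<in>UNIV. f (Y (\<sigma> l))) = (\<Sum>l\<in>UNIV. f (Y l))"
    by (rule sum.reindex_bij_witness[of _ \<sigma> \<sigma>]) (auto simp: \<sigma>_def)
  then show ?thesis by (simp add: sw)
qed

lemma Ys_perm:
  fixes f :: "real \<Rightarrow> 'a::comm_monoid_add"
  assumes "\<forall>e\<in>E. card e = 2" "es \<in> Om E t" "j \<le> t"
  shows "(\<Sum>l\<in>UNIV. f (Ys X es j l)) = (\<Sum>l\<in>(UNIV::'n::finite set). f (X l))"
  using assms(3)
proof (induction j)
  case 0 then show ?case by simp
next
  case (Suc j)
  have "es (Suc j) \<in> E" using assms(2) Suc.prems by (auto simp: Om_def)
  then have "card (es (Suc j)) = 2" using assms(1) by blast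
  then show ?case using Suc by (simp add: swp_perm)
qed


lemma avg_cong: "(\<And>es. es \<in> Om E t \<Longrightarrow> F es = G es) \<Longrightarrow> avg E t F = avg E t G"
  unfolding avg_def by (simp cong: sum.cong)

lemma avg_add: "avg E t (\<lambda>es. F es + G es) = avg E t F + avg E t G"
  unfolding avg_def by (simp add: sum.distrib scaleR_add_right)

lemma avg_cmul: "avg E t (\<lambda>es. (c::real) * F es) = c * avg E t F"
  unfolding avg_def by (simp add: sum_distrib_left)

lemma avg_nth: "(avg E t F) $ i = avg E t (\<lambda>es. F es $ i)"
  unfolding avg_def by simp

lemma avg_inner: "avg E t F \<bullet> y = avg E t (\<lambda>es. F es \<bullet> y)"
  unfolding avg_def by (simp add: inner_sum_left)

lemma avg_norm: "norm (avg E t F) \<le> avg E t (\<lambda>es. norm (F es))"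
proof -
  have "norm (avg E t F) = (1 / real (card E) ^ t) * norm (\<Sum>es\<in>Om E t. F es)"
    unfolding avg_def by simp
  also have "\<dots> \<le> (1 / real (card E) ^ t) * (\<Sum>es\<in>Om E t. norm (F es))"
    by (intro mult_left_mono norm_sum) auto
  finally show ?thesis unfolding avg_def by simp
qed

lemma avg_lin: "linear f \<Longrightarrow> avg E t (\<lambda>es. f (F es)) = f (avg E t F)"
  unfolding avg_def by (simp add: linear_scale linear_sum)

lemma avg_zero: "avg E 0 F = F (\<lambda>_. undefined)"
  unfolding avg_def Om_def by simp


context gctx begin

lemma Pm_linear: "linear Pm"
  by (rule linearI) (simp_all add: Pm_def matrix_vector_right_distrib matrix_vector_mult_scaleR algebra_simps)

lemma edges_at: "{e\<in>E. l \<in> e} = (\<lambda>j. {l,j}) ` {j. {l,j} \<in> E}"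
proof
  show "{e\<in>E. l \<in> e} \<subseteq> (\<lambda>j. {l,j}) ` {j. {l,j} \<in> E}"
  proof
    fix e assume e: "e \<in> {e\<in>E. l \<in> e}"
    then obtain a b where ab: "a \<noteq> b" "e = {a,b}" using edge2 by blast
    show "e \<in> (\<lambda>j. {l,j}) ` {j. {l,j} \<in> E}"
    proof (cases "l = a")
      case True then show ?thesis using e ab by auto
    next
      case False then have "l = b" using e ab by auto
      then have "e = {l, a}" using ab by auto
      then show ?thesis using e by auto
    qed
  qed
qed auto

lemma the_other: "{l,j} \<in> E \<Longrightarrow> the_elem ({l,j} - {l}) = j"
proof -
  assume "{l,j} \<in> E"
  then have "j \<noteq> l" using no_loop by auto
  then have "{l,j} - {l} = {j}" by auto
  then show ?thesis by simp
qed

lemma swp_sum: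
  "(\<Sum>e\<in>E. f (swp e Y l)) = Nn * f (Y l) - (\<Sum>j\<in>UNIV. if {l,j}\<in>E then f (Y l) - f (Y j) else 0)"
proof -
  have "(\<Sum>e\<in>E. f (swp e Y l) - f (Y l)) = (\<Sum>e\<in>E. if l \<in> e then f (Y (the_elem (e - {l}))) - f (Y l) else 0)"
    by (rule sum.cong) (auto simp: swp_def)
  also have "\<dots> = (\<Sum>e\<in>{e\<in>E. l \<in> e}. f (Y (the_elem (e - {l}))) - f (Y l))"
    by (rule sum.inter_filter[symmetric]) simp
  also have "\<dots> = (\<Sum>j\<in>{j. {l,j} \<in> E}. f (Y (the_elem ({l,j} - {l}))) - f (Y l))"
    unfolding edges_at
  proof (rule sum.reindex[unfolded comp_def])
    show "inj_on (\<lambda>j. {l, j}) {j. {l, j} \<in> E}"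
      by (rule inj_onI) (auto simp: doubleton_eq_iff)
  qed
  also have "\<dots> = (\<Sum>j\<in>{j. {l,j} \<in> E}. f (Y j) - f (Y l))"
  proof (rule sum.cong[OF refl])
    fix j assume "j \<in> {j. {l,j} \<in> E}"
    then have "{l,j} \<in> E" by simp
    then have "the_elem ({l,j} - {l}) = j" by (rule the_other)
    then show "f (Y (the_elem ({l,j} - {l}))) - f (Y l) = f (Y j) - f (Y l)" by (simp only:)
  qed
  also have "\<dots> = (\<Sum>j\<in>UNIV. if {l,j} \<in> E then f (Y j) - f (Y l) else 0)"
    by (simp add: sum.If_cases)
  finally have "(\<Sum>e\<in>E. f (swp e Y l)) - Nn * f (Y l) = (\<Sum>j\<in>UNIV. if {l,j} \<in> E then f (Y j) - f (Y l) else 0)"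
    by (simp add: sum_subtractf Nn_def)
  also have "\<dots> = - (\<Sum>j\<in>UNIV. if {l,j}\<in>E then f (Y l) - f (Y j) else 0)"
    by (simp add: sum_negf[symmetric]) (rule sum.cong; auto)
  finally show ?thesis by simp
qed

lemma step_avg:
  "(1 / Nn) *\<^sub>R (\<Sum>e\<in>E. (\<chi> l. f (swp e Y l))) = Pm (\<chi> l. f (Y l))"
proof -
  have "((1 / Nn) *\<^sub>R (\<Sum>e\<in>E. (\<chi> l. f (swp e Y l)))) $ l = (Pm (\<chi> l. f (Y l))) $ l" for l
  proof -
    have "((1 / Nn) *\<^sub>R (\<Sum>e\<in>E. (\<chi> l. f (swp e Y l)))) $ l = (1 / Nn) * (\<Sum>e\<in>E. f (swp e Y l))"
      by simp
    also have "\<dots> = f (Y l) - (1 / Nn) * (\<Sum>j\<in>UNIV. if {l,j}\<in>E then f (Y l) - f (Y j) else 0)"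
      unfolding swp_sum using Nn_pos by (simp add: right_diff_distrib)
    also have "\<dots> = (Pm (\<chi> l. f (Y l))) $ l"
      unfolding Pm_def lap_mult vector_minus_component vector_scaleR_component vec_lambda_beta
      by simp
    finally show ?thesis .
  qed
  then show ?thesis by (simp add: vec_eq_iff)
qed

end


locale proc = gctx E for E :: "('n::finite) set set" +
  fixes X :: "'n \<Rightarrow> real" and k :: 'n
begin

definition "nr = real CARD('n)"
definition "rr = real (obs_rank X k)"
definition "uu = (rr - 1) / nr"
definition "gk y = (if X k > y then 1 else 0) - uu"
definition Hv :: "(nat \<Rightarrow> 'n set) \<Rightarrow> nat \<Rightarrow> real^'n" where "Hv es j = (\<chi> l. gk (Ys X es j l))"
definition "Gv es j = gk (Ys X es j k)"
definition "Sv es t = (\<Sum>j<t. Gv es j)"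
definition "x0 = (\<Sum>l\<in>UNIV. (gk (X l))^2)"
definition "Va t = avg E t (\<lambda>es. Sv es t *\<^sub>R Hv es t)"
definition "Da t = avg E t (\<lambda>es. Gv es t *\<^sub>R Hv es t)"
definition "Aa t = avg E t (\<lambda>es. (Sv es t)^2)"

lemma nr_pos: "nr > 0" by (simp add: nr_def)

lemma card2E: "\<forall>e\<in>E. card e = 2" using sg by (simp add: simple_graph_def)

lemma sum_ind: "(\<Sum>l\<in>UNIV. (if X k > X l then 1 else 0::real)) = rr - 1"
  by (simp add: sum.If_cases rr_def obs_rank_def)

lemma nr_uu: "nr * uu = rr - 1" using nr_pos by (simp add: uu_def)

lemma sum_gk: "(\<Sum>l\<in>UNIV. gk (X l)) = 0"
  unfolding gk_def by (simp add: sum_subtractf sum_ind nr_uu[symmetric] nr_def)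

lemma x0_eq: "x0 = nr * uu * (1 - uu)"
proof -
  have "(gk y)^2 = (1 - 2*uu) * (if X k > y then 1 else 0) + uu^2" for y
    by (simp add: gk_def power2_eq_square algebra_simps)
  then have "x0 = (\<Sum>l\<in>UNIV. (1 - 2*uu) * (if X k > X l then 1 else 0) + uu^2)"
    by (simp add: x0_def)
  also have "\<dots> = (1 - 2*uu) * (rr - 1) + nr * uu^2"
    by (simp add: sum.distrib sum_distrib_left[symmetric] sum_ind nr_def)
  also have "\<dots> = nr * uu * (1 - uu)"
    by (simp add: nr_uu[symmetric] power2_eq_square algebra_simps)
  finally show ?thesis .
qed

lemma x0_nonneg: "x0 \<ge> 0" unfolding x0_def by (intro sum_nonneg) simp

lemma H_ones: "es \<in> Om E t \<Longrightarrow> j \<le> t \<Longrightarrow> Hv es j \<bullet> ones = 0"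
proof -
  assume a: "es \<in> Om E t" "j \<le> t"
  have "Hv es j \<bullet> ones = (\<Sum>l\<in>UNIV. gk (Ys X es j l))"
    by (simp add: Hv_def inner_vec_def)
  also have "\<dots> = (\<Sum>l\<in>UNIV. gk (X l))" by (rule Ys_perm[OF card2E a])
  finally show ?thesis by (simp add: sum_gk)
qed

lemma H_sq: "es \<in> Om E t \<Longrightarrow> j \<le> t \<Longrightarrow> Hv es j \<bullet> Hv es j = x0"
proof -
  assume a: "es \<in> Om E t" "j \<le> t"
  have "Hv es j \<bullet> Hv es j = (\<Sum>l\<in>UNIV. (gk (Ys X es j l))^2)"
    by (simp add: Hv_def inner_vec_def power2_eq_square)
  also have "\<dots> = (\<Sum>l\<in>UNIV. (gk (X l))^2)" by (rule Ys_perm[OF card2E a])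
  finally show ?thesis by (simp add: x0_def)
qed

lemma H_k: "Hv es j $ k = Gv es j" by (simp add: Hv_def Gv_def)

lemma G_bound: "es \<in> Om E t \<Longrightarrow> j \<le> t \<Longrightarrow> \<bar>Gv es j\<bar> * norm (Hv es j) \<le> x0 \<and> (Gv es j)^2 \<le> x0"
proof -
  assume a: "es \<in> Om E t" "j \<le> t"
  have n2: "(norm (Hv es j))^2 = x0" using H_sq[OF a] by (simp add: power2_norm_eq_inner)
  have g: "\<bar>Gv es j\<bar> \<le> norm (Hv es j)" using component_le_norm_cart[of "Hv es j" k] by (simp add: H_k)
  have "\<bar>Gv es j\<bar> * norm (Hv es j) \<le> norm (Hv es j) * norm (Hv es j)"
    using g by (intro mult_right_mono) auto
  moreover have "(Gv es j)^2 \<le> (norm (Hv es j))^2"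
    using g by (metis abs_ge_zero power2_abs power_mono)
  ultimately show ?thesis using n2 by (simp add: power2_eq_square)
qed

lemma Sv_upd: "Sv (es(Suc t := e)) (Suc t) = Sv es t + Gv es t"
proof -
  have "(\<Sum>j<t. gk (Ys X (es(Suc t := e)) j k)) = (\<Sum>j<t. gk (Ys X es j k))"
    by (rule sum.cong) (simp_all add: Ys_upd)
  then show ?thesis unfolding Sv_def Gv_def by (simp add: Ys_upd)
qed

lemma Hv_upd: "Hv (es(Suc t := e)) (Suc t) = (\<chi> l. gk (swp e (Ys X es t) l))"
  unfolding Hv_def by (simp add: Ys_upd)

lemma Va_Suc: "Va (Suc t) = Pm (Va t + Da t)"
proof -
  have "Va (Suc t) = avg E t (\<lambda>es. (1 / real (card E)) *\<^sub>R
          (\<Sum>e\<in>E. Sv (es(Suc t := e)) (Suc t) *\<^sub>R Hv (es(Suc t := e)) (Suc t)))"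
    unfolding Va_def by (rule avg_Suc)
  also have "\<dots> = avg E t (\<lambda>es. (Sv es t + Gv es t) *\<^sub>R
          ((1 / Nn) *\<^sub>R (\<Sum>e\<in>E. (\<chi> l. gk (swp e (Ys X es t) l)))))"
    unfolding Sv_upd Hv_upd Nn_def by (simp add: scaleR_sum_right)
  also have "\<dots> = avg E t (\<lambda>es. (Sv es t + Gv es t) *\<^sub>R Pm (Hv es t))"
    unfolding step_avg Hv_def by simp
  also have "\<dots> = avg E t (\<lambda>es. Pm ((Sv es t + Gv es t) *\<^sub>R Hv es t))"
    using linear_scale[OF Pm_linear] by simp
  also have "\<dots> = Pm (avg E t (\<lambda>es. (Sv es t + Gv es t) *\<^sub>R Hv es t))"
    by (rule avg_lin[OF Pm_linear])
  also have "avg E t (\<lambda>es. (Sv es t + Gv es t) *\<^sub>R Hv es t) = Va t + Da t"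
    unfolding Va_def Da_def by (simp add: scaleR_add_left avg_add)
  finally show ?thesis .
qed

lemma avg_zero_fun: "avg E t (\<lambda>_. 0::'a::real_vector) = 0"
  unfolding avg_def by simp

lemma VD_ones: "(Va t + Da t) \<bullet> ones = 0"
proof -
  have "(Va t + Da t) = avg E t (\<lambda>es. (Sv es t + Gv es t) *\<^sub>R Hv es t)"
    unfolding Va_def Da_def by (simp add: scaleR_add_left avg_add)
  then have "(Va t + Da t) \<bullet> ones = avg E t (\<lambda>es. ((Sv es t + Gv es t) *\<^sub>R Hv es t) \<bullet> ones)"
    by (simp add: avg_inner)
  also have "\<dots> = avg E t (\<lambda>_. 0)"
    by (rule avg_cong) (simp add: H_ones)
  finally show ?thesis by (simp add: avg_zero_fun)
qed

lemma Da_norm: "norm (Da t) \<le> x0"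
proof -
  have "norm (Da t) \<le> avg E t (\<lambda>es. norm (Gv es t *\<^sub>R Hv es t))"
    unfolding Da_def by (rule avg_norm)
  also have "\<dots> \<le> avg E t (\<lambda>_. x0)"
    by (rule avg_mono) (use G_bound in simp)
  also have "\<dots> = x0" using finE E_ne by (rule avg_const)
  finally show ?thesis .
qed

lemma Va_norm: "norm (Va t) \<le> x0 * (1 - cc) / cc"
proof (induction t)
  case 0
  have "Va 0 = 0" unfolding Va_def avg_zero by (simp add: Sv_def)
  then show ?case using x0_nonneg cc_pos cc_le1 by simp
next
  case (Suc t)
  have "norm (Va (Suc t)) \<le> (1 - cc) * norm (Va t + Da t)"
    unfolding Va_Suc by (rule contraction) (rule VD_ones)
  also have "\<dots> \<le> (1 - cc) * (x0 * (1 - cc) / cc + x0)"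
  proof (rule mult_left_mono)
    show "norm (Va t + Da t) \<le> x0 * (1 - cc) / cc + x0"
      using norm_triangle_ineq[of "Va t" "Da t"] Suc.IH Da_norm[of t] by linarith
    show "0 \<le> 1 - cc" using cc_le1 by simp
  qed
  also have "\<dots> = x0 * (1 - cc) / cc"
    using cc_pos by (simp add: field_simps)
  finally show ?case .
qed

lemma Aa_Suc: "Aa (Suc t) = Aa t + 2 * (Va t $ k) + avg E t (\<lambda>es. (Gv es t)^2)"
proof -
  have "Aa (Suc t) = avg E t (\<lambda>es. (1 / real (card E)) *\<^sub>R (\<Sum>e\<in>E. (Sv (es(Suc t := e)) (Suc t))^2))"
    unfolding Aa_def by (rule avg_Suc)
  also have "\<dots> = avg E t (\<lambda>es. (Sv es t + Gv es t)^2)"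
    using N_pos E_ne by (simp add: Sv_upd)
  also have "\<dots> = avg E t (\<lambda>es. (Sv es t)^2 + (2 * (Sv es t * Gv es t) + (Gv es t)^2))"
    by (simp add: power2_eq_square algebra_simps)
  also have "\<dots> = Aa t + 2 * avg E t (\<lambda>es. Sv es t * Gv es t) + avg E t (\<lambda>es. (Gv es t)^2)"
    unfolding Aa_def by (simp add: avg_add avg_cmul)
  also have "avg E t (\<lambda>es. Sv es t * Gv es t) = Va t $ k"
    unfolding Va_def avg_nth by (simp add: H_k)
  finally show ?thesis .
qed

lemma Aa_bound: "Aa t \<le> real t * (x0 * (2 * (1 - cc) / cc + 1))"
proof (induction t)
  case 0
  show ?case unfolding Aa_def avg_zero by (simp add: Sv_def)
next
  case (Suc t)
  have "Va t $ k \<le> x0 * (1 - cc) / cc"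
    using component_le_norm_cart[of "Va t" k] Va_norm[of t] by linarith
  moreover have "avg E t (\<lambda>es. (Gv es t)^2) \<le> avg E t (\<lambda>_. x0)"
    by (rule avg_mono) (use G_bound in simp)
  moreover have "avg E t (\<lambda>_. x0) = x0" using finE E_ne by (rule avg_const)
  moreover have "x0 * (2 * (1 - cc) / cc + 1) = 2 * (x0 * (1 - cc) / cc) + x0"
    using cc_pos by (simp add: field_simps)
  ultimately have "Aa (Suc t) \<le> Aa t + x0 * (2 * (1 - cc) / cc + 1)"
    unfolding Aa_Suc by linarith
  moreover have "real (Suc t) * (x0 * (2 * (1 - cc) / cc + 1))
      = real t * (x0 * (2 * (1 - cc) / cc + 1)) + x0 * (2 * (1 - cc) / cc + 1)"
    by (simp add: distrib_right)
  ultimately show ?case using Suc.IH by linarith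
qed

end


lemma half_ne: "real (p::nat) \<noteq> real q + 1/2"
proof
  assume "real p = real q + 1/2"
  then have "real (2*p) = real (2*q + 1)" by simp
  then have "2*p = 2*q + 1" by (simp only: of_nat_eq_iff)
  then show False by presburger
qed

lemma tw_bound:
  fixes a b r R W \<gamma> :: real
  assumes g: "\<gamma> = min \<bar>r - a\<bar> \<bar>r - b\<bar>" and gpos: "\<gamma> > 0" and W: "W \<ge> 0"
  shows "\<bar>(if a \<le> R \<and> R \<le> b then W else 0) - (if a \<le> r \<and> r \<le> b then W else 0)\<bar> \<le> W * (R - r)^2 / \<gamma>^2"
proof (cases "(a \<le> R \<and> R \<le> b) = (a \<le> r \<and> r \<le> b)")
  case True
  then show ?thesis using W by simp
next
  case False
  then have "\<bar>R - r\<bar> \<ge> \<gamma>" using g by (auto simp: min_def abs_if split: if_splits)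
  then have "\<gamma>^2 \<le> (R - r)^2" using gpos by (metis abs_ge_zero less_imp_le power2_abs power_mono)
  then have "1 \<le> (R - r)^2 / \<gamma>^2" using gpos by simp
  then have "W * 1 \<le> W * ((R - r)^2 / \<gamma>^2)" using W by (intro mult_left_mono)
  moreover have "\<bar>(if a \<le> R \<and> R \<le> b then W else 0) - (if a \<le> r \<and> r \<le> b then W else 0)\<bar> = W"
    using False W by auto
  ultimately show ?thesis by simp
qed

lemma avg_abs_diff:
  assumes "finite E" "E \<noteq> {}"
  shows "\<bar>avg E t F - (c::real)\<bar> \<le> avg E t (\<lambda>es. \<bar>F es - c\<bar>)"
proof -
  have "avg E t (\<lambda>es. F es - c) = avg E t F - c"
    using avg_add[of E t F "\<lambda>_. - c"] avg_const[OF assms, of t "- c"] by simp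
  moreover have "norm (avg E t (\<lambda>es. F es - c)) \<le> avg E t (\<lambda>es. norm (F es - c))" by (rule avg_norm)
  ultimately show ?thesis by simp
qed

theorem lemma1:
  fixes E :: "('n::finite) set set" and X :: "'n \<Rightarrow> real" and \<alpha> :: real
    and k :: 'n and t :: nat
  assumes "CARD('n) \<ge> 2"
    and "simple_graph E" and "connected_graph E" and "\<not> bipartite E"
    and "inj X"
    and "0 < \<alpha>" and "\<alpha> < 1/2"
    and "t \<ge> 1"
  shows "let n = CARD('n); m = real (nat \<lfloor>\<alpha> * real n\<rfloor>);
             r = real (obs_rank X k);
             c = second_smallest_eigenvalue (laplacian E) / real (card E);
             u = (r - 1) / real n;
             \<sigma>sq = real n ^ 3 * (u * (1 - u));
             a = m + 1/2; b = real n - m + 1/2;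
             \<gamma> = min \<bar>r - a\<bar> \<bar>r - b\<bar>
         in \<bar>expected_W E X \<alpha> t k - trim_weight n \<alpha> r\<bar>
              \<le> 3 / (c * real t) * (\<sigma>sq / (\<gamma>^2 * (1 - 2 * \<alpha>)))"
proof -
  interpret p: proc E X k
    by unfold_locales (use assms in auto)
  define n where "n = real CARD('n)"
  define m where "m = real (nat \<lfloor>\<alpha> * n\<rfloor>)"
  define r where "r = real (obs_rank X k)"
  define a where "a = m + 1/2"
  define b where "b = n - m + 1/2"
  define \<gamma> where "\<gamma> = min \<bar>r - a\<bar> \<bar>r - b\<bar>"
  define W where "W = n / (n - 2 * m)"
  define u where "u = (r - 1) / n"
  define \<sigma>sq where "\<sigma>sq = n ^ 3 * (u * (1 - u))"
  have tpos: "real t > 0" using assms(8) by simp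
  have npos: "n > 0" by (simp add: n_def)
  have m_le: "m \<le> \<alpha> * n"
  proof -
    have "\<lfloor>\<alpha> * n\<rfloor> \<ge> 0" using assms(6) npos by simp
    then have "m = real_of_int \<lfloor>\<alpha> * n\<rfloor>" by (simp add: m_def)
    then show ?thesis by linarith
  qed
  have m0: "m \<ge> 0" by (simp add: m_def)
  have den: "n - 2 * m \<ge> n * (1 - 2 * \<alpha>)" using m_le by (simp add: algebra_simps)
  have den_pos: "n * (1 - 2 * \<alpha>) > 0" using npos assms(7) by simp
  have dpos: "n - 2 * m > 0" using den den_pos by linarith
  have Wpos: "W \<ge> 0" using dpos npos by (simp add: W_def)
  have W_le: "W \<le> 1 / (1 - 2 * \<alpha>)"
  proof -
    have "W \<le> n / (n * (1 - 2 * \<alpha>))" unfolding W_def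
      using den den_pos npos by (intro divide_left_mono) auto
    also have "\<dots> = 1 / (1 - 2 * \<alpha>)" using npos by simp
    finally show ?thesis .
  qed
  have gpos: "\<gamma> > 0"
  proof -
    have "r \<noteq> a" unfolding r_def a_def m_def by (rule half_ne)
    moreover have "r \<noteq> b"
    proof
      assume "r = b"
      then have "real (obs_rank X k + nat \<lfloor>\<alpha> * n\<rfloor>) = real CARD('n) + 1/2"
        by (simp add: r_def b_def m_def n_def)
      then show False using half_ne by blast
    qed
    ultimately show ?thesis by (simp add: \<gamma>_def)
  qed
  have tw: "trim_weight CARD('n) \<alpha> x = (if a \<le> x \<and> x \<le> b then W else 0)" for x
    by (simp add: trim_weight_def Let_def a_def b_def W_def m_def n_def)
  have uu: "p.uu = u" by (simp add: p.uu_def p.rr_def p.nr_def u_def r_def n_def)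
  have Sv_cnt: "p.Sv es t = cnt X k es t - real t * u" for es
    unfolding p.Sv_def p.Gv_def p.gk_def cnt_def by (simp add: sum_subtractf uu)
  have R_r: "n * (cnt X k es t / real t) + 1 - r = n * p.Sv es t / real t" for es
  proof -
    have rr: "r = 1 + n * u" using npos by (simp add: u_def)
    show ?thesis unfolding Sv_cnt rr using tpos by (simp add: field_simps)
  qed
  have EW: "expected_W E X \<alpha> t k = avg E t (\<lambda>es. trim_weight CARD('n) \<alpha> (n * (cnt X k es t / real t) + 1))"
    unfolding expected_W_def avg_def Om_def[symmetric] n_def
    by (simp add: W_at_eq[OF assms(8)] divide_inverse mult.commute)
  have "\<bar>expected_W E X \<alpha> t k - trim_weight CARD('n) \<alpha> r\<bar>
      \<le> avg E t (\<lambda>es. \<bar>trim_weight CARD('n) \<alpha> (n * (cnt X k es t / real t) + 1) - trim_weight CARD('n) \<alpha> r\<bar>)"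
    unfolding EW by (rule avg_abs_diff[OF p.finE p.E_ne])
  also have "\<dots> \<le> avg E t (\<lambda>es. W * (n * (cnt X k es t / real t) + 1 - r)^2 / \<gamma>^2)"
    by (rule avg_mono) (simp only: tw, rule tw_bound[OF \<gamma>_def gpos Wpos])
  also have "\<dots> = avg E t (\<lambda>es. (W * n^2 / (\<gamma>^2 * (real t)^2)) * (p.Sv es t)^2)"
  proof (rule avg_cong)
    fix es
    have e: "n * (cnt X k es t / real t) + 1 - r = n * p.Sv es t / real t" by (rule R_r)
    show "W * (n * (cnt X k es t / real t) + 1 - r)^2 / \<gamma>^2 = (W * n^2 / (\<gamma>^2 * (real t)^2)) * (p.Sv es t)^2"
      unfolding e using gpos tpos by (simp add: power_divide power_mult_distrib field_simps)
  qed
  also have "\<dots> = (W * n^2 / (\<gamma>^2 * (real t)^2)) * p.Aa t"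
    unfolding p.Aa_def by (rule avg_cmul)
  also have "\<dots> \<le> (W * n^2 / (\<gamma>^2 * (real t)^2)) * (real t * (p.x0 * (2 * (1 - p.cc) / p.cc + 1)))"
    using Wpos gpos by (intro mult_left_mono p.Aa_bound) auto
  also have "\<dots> \<le> (W * n^2 / (\<gamma>^2 * (real t)^2)) * (real t * (p.x0 * (3 / p.cc)))"
  proof -
    have "2 * (1 - p.cc) / p.cc + 1 \<le> 3 / p.cc"
      using p.cc_pos p.cc_le1 by (simp add: field_simps)
    then have "p.x0 * (2 * (1 - p.cc) / p.cc + 1) \<le> p.x0 * (3 / p.cc)"
      by (rule mult_left_mono) (rule p.x0_nonneg)
    then have "real t * (p.x0 * (2 * (1 - p.cc) / p.cc + 1)) \<le> real t * (p.x0 * (3 / p.cc))"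
      by (rule mult_left_mono) simp
    then show ?thesis by (rule mult_left_mono) (use Wpos gpos tpos in simp)
  qed
  also have "\<dots> = 3 / (p.cc * real t) * (W * \<sigma>sq / \<gamma>^2)"
  proof -
    have x0e: "p.x0 = n * u * (1 - u)" using p.x0_eq by (simp add: uu p.nr_def n_def)
    show ?thesis unfolding x0e using tpos gpos p.cc_pos npos
      by (simp add: \<sigma>sq_def field_simps power2_eq_square power3_eq_cube)
  qed
  also have "\<dots> \<le> 3 / (p.cc * real t) * (\<sigma>sq / (\<gamma>^2 * (1 - 2 * \<alpha>)))"
  proof -
    have s0: "\<sigma>sq \<ge> 0"
    proof -
      have "p.x0 = n * u * (1 - u)" using p.x0_eq by (simp add: uu p.nr_def n_def)
      then have "u * (1 - u) \<ge> 0" using p.x0_nonneg npos by (simp add: zero_le_mult_iff mult.assoc)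
      then show ?thesis using npos by (simp add: \<sigma>sq_def)
    qed
    have "W * \<sigma>sq / \<gamma>^2 \<le> (1 / (1 - 2 * \<alpha>)) * \<sigma>sq / \<gamma>^2"
      using W_le s0 gpos by (intro divide_right_mono mult_right_mono) auto
    also have "\<dots> = \<sigma>sq / (\<gamma>^2 * (1 - 2 * \<alpha>))" by simp
    finally show ?thesis using p.cc_pos tpos by (intro mult_left_mono) auto
  qed
  finally have main: "\<bar>expected_W E X \<alpha> t k - trim_weight CARD('n) \<alpha> r\<bar>
      \<le> 3 / (p.cc * real t) * (\<sigma>sq / (\<gamma>^2 * (1 - 2 * \<alpha>)))" .
  have cc: "p.cc = second_smallest_eigenvalue (laplacian E) / real (card E)"
    by (simp add: p.cc_def p.Nn_def)
  show ?thesis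
    using main unfolding Let_def cc[symmetric]
    by (simp add: \<sigma>sq_def u_def \<gamma>_def a_def b_def m_def r_def n_def)
qed


end
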